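(* Let $d\geq2$, $m>0$, $1\leq d'\leq d-1$, and let $p$ be the distribution on $\mathbb{Z}^d$ given by $p_{k_1,\dots,k_d}=f_{m,d}(a_1,\dots,a_d)^{-1}\big(1+\sum_{i=1}^d k_i^2/a_i^2\big)^{-\frac{m+d}{2}}$, with $f_{m,d}$ the normalizing constant. Let $p_{k_1,\dots,k_{d'}}=\sum_{(k_{d'+1},\dots,k_d)\in\mathbb{Z}^{d-d'}}p_{k_1,\dots,k_d}$ be its $d'$-variate marginal. Then for every fixed $(k_1,\dots,k_{d'})\in\mathbb{Z}^{d'}$, as $\min_{1\le i\le d}a_i\to\infty$, $$\frac{p_{k_1,\dots,k_{d'}}}{\dfrac{\Gamma(\frac{m+d'}{2})}{\pi^{d'/2}\,\Gamma(\frac m2)\prod_{i=1}^{d'}a_i}\Big(1+\sum_{i=1}^{d'}\dfrac{k_i^2}{a_i^2}\Big)^{-\frac{m+d'}{2}}}\to1,$$ i.e. the marginal is asymptotically the $d'$-variate discrete Tsallis law with the same parameter $m$.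
   Context: $\Gamma$ is the Euler Gamma function; $f_{m,d}(a_1,\dots,a_d)=\sum_{k\in\mathbb{Z}^d}\big(1+\sum_{i=1}^dk_i^2/a_i^2\big)^{-\frac{m+d}{2}}$. *)

theory Defs
  imports "HOL-Analysis.Analysis"
begin

text \<open>Integer vectors in Z^d, represented as functions nat => int supported on {..<d}.\<close>
definition zvecs :: "nat \<Rightarrow> (nat \<Rightarrow> int) set" where
  "zvecs d = {k. \<forall>i\<ge>d. k i = 0}"

definition tsallis_weight :: "real \<Rightarrow> nat \<Rightarrow> (nat \<Rightarrow> real) \<Rightarrow> (nat \<Rightarrow> int) \<Rightarrow> real" where
  "tsallis_weight m d a k =
     (1 + (\<Sum>i<d. (of_int (k i))\<^sup>2 / (a i)\<^sup>2)) powr (- (m + real d) / 2)"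

definition tsallis_f :: "real \<Rightarrow> nat \<Rightarrow> (nat \<Rightarrow> real) \<Rightarrow> real" where
  "tsallis_f m d a = infsum (tsallis_weight m d a) (zvecs d)"

definition tsallis_p :: "real \<Rightarrow> nat \<Rightarrow> (nat \<Rightarrow> real) \<Rightarrow> (nat \<Rightarrow> int) \<Rightarrow> real" where
  "tsallis_p m d a k = tsallis_weight m d a k / tsallis_f m d a"

definition tsallis_marginal ::
  "real \<Rightarrow> nat \<Rightarrow> nat \<Rightarrow> (nat \<Rightarrow> real) \<Rightarrow> (nat \<Rightarrow> int) \<Rightarrow> real" where
  "tsallis_marginal m d d' a k0 =
     infsum (tsallis_p m d a) {k \<in> zvecs d. \<forall>i<d'. k i = k0 i}"

definition tsallis_approx :: "real \<Rightarrow> nat \<Rightarrow> (nat \<Rightarrow> real) \<Rightarrow> (nat \<Rightarrow> int) \<Rightarrow> real" where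
  "tsallis_approx m d' a k0 =
     Gamma ((m + real d') / 2) / (pi powr (real d' / 2) * Gamma (m / 2) * (\<Prod>i<d'. a i))
     * (1 + (\<Sum>i<d'. (of_int (k0 i))\<^sup>2 / (a i)\<^sup>2)) powr (- (m + real d') / 2)"

end

theory Submission
  imports Defs "HOL-Real_Asymp.Real_Asymp"
begin


definition gg :: "real \<Rightarrow> real \<Rightarrow> real" where
  "gg s x = (1 + x\<^sup>2) powr (-s)"

lemma pos1: "(1::real) + x\<^sup>2 > 0"
  by (smt (verit) zero_le_power2)

lemma gg_pos: "gg s x > 0"
  unfolding gg_def using pos1[of x] by simp

lemma gg_cont: "continuous_on A (gg s)"
  unfolding gg_def
  by (intro continuous_intros) (use pos1 in \<open>auto simp: less_imp_neq[symmetric]\<close>)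

lemma gg_antimono:
  assumes "0 \<le> x" "x \<le> y" "s \<ge> 0"
  shows "gg s y \<le> gg s x"
  unfolding gg_def
proof (rule powr_mono2')
  show "- s \<le> 0" using assms by simp
  show "0 < 1 + x\<^sup>2" by (rule pos1)
  show "1 + x\<^sup>2 \<le> 1 + y\<^sup>2" using assms by (simp add: power_mono)
qed

lemma gg_integrable: "gg s integrable_on {a..b}"
  by (intro integrable_continuous_interval gg_cont)

lemma gg_piece:
  assumes "0 \<le> a" "a \<le> b" "s \<ge> 0"
  shows "(b - a) * gg s b \<le> integral {a..b} (gg s)"
    and "integral {a..b} (gg s) \<le> (b - a) * gg s a"
proof -
  have "integral {a..b} (\<lambda>_. gg s b) \<le> integral {a..b} (gg s)"
    by (rule integral_le) (use assms in \<open>auto intro!: gg_integrable gg_antimono\<close>)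
  then show "(b - a) * gg s b \<le> integral {a..b} (gg s)" using assms by simp
  have "integral {a..b} (gg s) \<le> integral {a..b} (\<lambda>_. gg s a)"
    by (rule integral_le) (use assms in \<open>auto intro!: gg_integrable gg_antimono\<close>)
  then show "integral {a..b} (gg s) \<le> (b - a) * gg s a" using assms by simp
qed

lemma gg_split:
  assumes "\<beta> > 0"
  shows "integral {0..real N / \<beta>} (gg s) =
         (\<Sum>k<N. integral {real k / \<beta>..real (Suc k) / \<beta>} (gg s))"
proof (induction N)
  case 0
  then show ?case by simp
next
  case (Suc N)
  have "integral {0..real N / \<beta>} (gg s) + integral {real N / \<beta>..real (Suc N) / \<beta>} (gg s)
        = integral {0..real (Suc N) / \<beta>} (gg s)"
    by (rule Henstock_Kurzweil_Integration.integral_combine) (use assms in \<open>auto intro!: gg_integrable divide_right_mono\<close>)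
  then show ?case using Suc by simp
qed

lemma gg_partial_bounds:
  assumes "\<beta> > 0" "s \<ge> 0"
  shows "(\<Sum>k<N. gg s (real (Suc k) / \<beta>) / \<beta>) \<le> integral {0..real N / \<beta>} (gg s)"
    and "integral {0..real N / \<beta>} (gg s) \<le> (\<Sum>k<N. gg s (real k / \<beta>) / \<beta>)"
proof -
  have d: "(1 + real k) / \<beta> - real k / \<beta> = 1 / \<beta>" for k
    using assms by (simp add: field_simps)
  have le: "real k / \<beta> \<le> real (Suc k) / \<beta>" for k
    using assms by (simp add: divide_right_mono)
  show "(\<Sum>k<N. gg s (real (Suc k) / \<beta>) / \<beta>) \<le> integral {0..real N / \<beta>} (gg s)"
    unfolding gg_split[OF assms(1)]
  proof (rule sum_mono)
    fix k
    have "(real (Suc k) / \<beta> - real k / \<beta>) * gg s (real (Suc k) / \<beta>)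
          \<le> integral {real k / \<beta>..real (Suc k) / \<beta>} (gg s)"
      by (rule gg_piece(1)) (use assms le in auto)
    then show "gg s (real (Suc k) / \<beta>) / \<beta> \<le> integral {real k / \<beta>..real (Suc k) / \<beta>} (gg s)"
      by (simp add: d)
  qed
  show "integral {0..real N / \<beta>} (gg s) \<le> (\<Sum>k<N. gg s (real k / \<beta>) / \<beta>)"
    unfolding gg_split[OF assms(1)]
  proof (rule sum_mono)
    fix k
    have "integral {real k / \<beta>..real (Suc k) / \<beta>} (gg s)
          \<le> (real (Suc k) / \<beta> - real k / \<beta>) * gg s (real k / \<beta>)"
      by (rule gg_piece(2)) (use assms le in auto)
    then show "integral {real k / \<beta>..real (Suc k) / \<beta>} (gg s) \<le> gg s (real k / \<beta>) / \<beta>"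
      by (simp add: d)
  qed
qed



lemma gi_deriv:
  assumes "x > 0"
  shows "((\<lambda>y. integral {0..y} (gg s)) has_real_derivative gg s x) (at x)"
proof -
  have "((\<lambda>y. integral {0..y} (gg s)) has_real_derivative gg s x) (at x within {0..x+1})"
    by (rule integral_has_real_derivative) (use assms in \<open>auto intro: gg_cont\<close>)
  moreover have "at x within {0..x+1} = at x"
    by (rule at_within_Icc_at) (use assms in auto)
  ultimately show ?thesis by simp
qed

lemma beta_subst:
  assumes s: "s > 1/2" and U: "0 \<le> U" "U < 1"
  shows "((\<lambda>t. t powr (1/2 - 1) * (1 - t) powr ((s - 1/2) - 1)) has_integral
            2 * integral {0..sqrt (U / (1 - U))} (gg s)) {0..U}"
proof -
  define \<Psi> where "\<Psi> u = sqrt (u / (1 - u))" for u :: real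
  define F where "F u = 2 * integral {0..\<Psi> u} (gg s)" for u
  have psi_mono: "\<Psi> u \<le> \<Psi> U" if "u \<in> {0..U}" for u
  proof -
    have "u / (1 - u) \<le> U / (1 - U)"
      using that U by (auto simp: field_simps intro!: mult_mono)
    then show ?thesis unfolding \<Psi>_def by simp
  qed
  have psi_nonneg: "\<Psi> u \<ge> 0" if "u \<in> {0..U}" for u
    using that U unfolding \<Psi>_def by auto
  have contF: "continuous_on {0..U} F"
  proof -
    have c1: "continuous_on {0..U} \<Psi>"
      unfolding \<Psi>_def by (intro continuous_intros) (use U in auto)
    have c2: "continuous_on {0..\<Psi> U} (\<lambda>y. integral {0..y} (gg s))"
      by (rule indefinite_integral_continuous_1) (rule gg_integrable)
    have "continuous_on {0..U} (\<lambda>u. integral {0..\<Psi> u} (gg s))"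
      by (rule continuous_on_compose2[OF c2 c1]) (use psi_mono psi_nonneg in auto)
    then show ?thesis unfolding F_def by (intro continuous_intros)
  qed
  have derF: "(F has_vector_derivative (u powr (1/2 - 1) * (1 - u) powr ((s - 1/2) - 1))) (at u)"
    if u: "u \<in> {0<..<U}" for u
  proof -
    define v where "v = 1 - u"
    have u0: "u > 0" and v0: "v > 0" using u U by (auto simp: v_def)
    have q: "((\<lambda>u. u / (1 - u)) has_real_derivative 1 / v\<^sup>2) (at u)"
      using v0 unfolding v_def
      by (auto intro!: derivative_eq_intros simp: field_simps power2_eq_square)
    have qpos: "u / (1 - u) > 0" using u0 v0 by (simp add: v_def)
    have dpsi: "(\<Psi> has_real_derivative (inverse (sqrt (u / (1 - u))) / 2) * (1 / v\<^sup>2)) (at u)"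
      unfolding \<Psi>_def by (rule DERIV_chain2[OF DERIV_real_sqrt[OF qpos] q])
    have psipos: "\<Psi> u > 0" unfolding \<Psi>_def using qpos by simp
    have dF: "(F has_real_derivative 2 * (gg s (\<Psi> u) * ((inverse (sqrt (u / (1 - u))) / 2) * (1 / v\<^sup>2)))) (at u)"
      unfolding F_def
      by (intro DERIV_cmult DERIV_chain2[OF gi_deriv[OF psipos] dpsi])
    have eq: "2 * (gg s (\<Psi> u) * ((inverse (sqrt (u / (1 - u))) / 2) * (1 / v\<^sup>2)))
              = u powr (1/2 - 1) * (1 - u) powr ((s - 1/2) - 1)"
    proof -
      have "1 + (\<Psi> u)\<^sup>2 = 1 / v"
        unfolding \<Psi>_def using qpos v0 by (simp add: v_def field_simps)
      then have g: "gg s (\<Psi> u) = v powr s"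
        unfolding gg_def using v0 by (simp add: powr_minus_divide powr_divide)
      have sq: "sqrt (u / (1 - u)) = sqrt u / sqrt v" by (simp add: v_def real_sqrt_divide)
      have hA: "u powr (1/2 - 1) = 1 / sqrt u"
        using u0 by (simp add: powr_minus_divide powr_half_sqrt)
      have hB: "v powr ((s - 1/2) - 1) = v powr s / (v * sqrt v)"
      proof -
        have e1: "(s - 1/2) - 1 = s - (1 + 1/2)" by simp
        have "v powr ((s - 1/2) - 1) = v powr s / (v powr 1 * v powr (1/2))"
          by (simp only: e1 powr_diff powr_add)
        then show ?thesis using v0 by (simp add: powr_half_sqrt)
      qed
      have gen: "\<And>w x P::real. w > 0 \<Longrightarrow> x > 0 \<Longrightarrow>
          2 * (P * ((inverse (x / w) / 2) * (1 / (w\<^sup>2)\<^sup>2))) = 1 / x * (P / (w\<^sup>2 * w))"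
        by (simp add: field_simps power2_eq_square)
      have key: "2 * (v powr s * ((inverse (sqrt u / sqrt v) / 2) * (1 / ((sqrt v)\<^sup>2)\<^sup>2)))
           = 1 / sqrt u * (v powr s / ((sqrt v)\<^sup>2 * sqrt v))"
        by (rule gen) (use u0 v0 in auto)
      have key2: "2 * (v powr s * ((inverse (sqrt u / sqrt v) / 2) * (1 / v\<^sup>2)))
           = 1 / sqrt u * (v powr s / (v * sqrt v))"
        using key by (simp only: real_sqrt_pow2[OF less_imp_le[OF v0]])
      show ?thesis
        unfolding g hA hB v_def[symmetric] real_sqrt_divide by (rule key2)
    qed
    show ?thesis using dF unfolding eq has_real_derivative_iff_has_vector_derivative .
  qed
  have "((\<lambda>t. t powr (1/2 - 1) * (1 - t) powr ((s - 1/2) - 1)) has_integral F U - F 0) {0..U}"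
    by (rule fundamental_theorem_of_calculus_interior[OF U(1) contF derF]) auto
  moreover have "F 0 = 0" unfolding F_def \<Psi>_def by simp
  ultimately show ?thesis unfolding F_def \<Psi>_def by simp
qed



definition Bf :: "real \<Rightarrow> real \<Rightarrow> real" where
  "Bf s t = t powr (1/2 - 1) * (1 - t) powr ((s - 1/2) - 1)"

lemma G_lim:
  assumes s: "s > 1/2"
  shows "((\<lambda>X. integral {0..X} (gg s)) \<longlongrightarrow> Beta (1/2) (s - 1/2) / 2) at_top"
proof -
  define H where "H u = integral {0..u} (Bf s)" for u
  define U where "U X = X\<^sup>2 / (1 + X\<^sup>2)" for X :: real
  have int: "Bf s integrable_on {0..1}"
    unfolding Bf_def by (rule integrable_Beta') (use s in auto)
  have Hc: "continuous_on {0..1} H"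
    unfolding H_def by (rule indefinite_integral_continuous_1[OF int])
  have H1: "H 1 = Beta (1/2) (s - 1/2)"
    unfolding H_def Bf_def
    by (rule integral_unique, rule has_integral_Beta_real) (use s in auto)
  have Ulim: "(U \<longlongrightarrow> 1) at_top" unfolding U_def by real_asymp
  have Uin: "U X \<in> {0..1}" for X
    using pos1[of X] unfolding U_def by (auto simp: field_simps)
  have HU: "((\<lambda>X. H (U X)) \<longlongrightarrow> H 1) at_top"
    by (rule continuous_on_tendsto_compose[OF Hc Ulim]) (use Uin in auto)
  have eq: "H (U X) / 2 = integral {0..X} (gg s)" if X: "X \<ge> 0" for X
  proof -
    have U0: "0 \<le> U X" "U X < 1" using pos1[of X] unfolding U_def by (auto simp: field_simps)
    have "U X / (1 - U X) = X\<^sup>2"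
      using pos1[of X] unfolding U_def by (simp add: field_simps)
    then have sq: "sqrt (U X / (1 - U X)) = X" using X by simp
    have "(Bf s has_integral 2 * integral {0..X} (gg s)) {0..U X}"
      using beta_subst[OF s U0] unfolding sq Bf_def .
    then show ?thesis unfolding H_def by (simp add: integral_unique)
  qed
  have "((\<lambda>X. H (U X) / 2) \<longlongrightarrow> H 1 / 2) at_top"
    by (intro tendsto_divide HU tendsto_const) auto
  then show ?thesis
    unfolding H1
    by (rule Lim_transform_eventually) (use eq in \<open>auto simp: eventually_at_top_linorder\<close>)
qed



lemma G_mono:
  assumes "0 \<le> X" "X \<le> Y" "s \<ge> 0"
  shows "integral {0..X} (gg s) \<le> integral {0..Y} (gg s)"
proof -
  have "integral {0..X} (gg s) + integral {X..Y} (gg s) = integral {0..Y} (gg s)"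
    by (rule Henstock_Kurzweil_Integration.integral_combine) (use assms in \<open>auto intro: gg_integrable\<close>)
  moreover have "integral {X..Y} (gg s) \<ge> 0"
    by (rule integral_nonneg) (auto intro: gg_integrable less_imp_le[OF gg_pos])
  ultimately show ?thesis by linarith
qed

lemma G_le_J:
  assumes s: "s > 1/2" and X: "X \<ge> 0"
  shows "integral {0..X} (gg s) \<le> Beta (1/2) (s - 1/2) / 2"
proof (rule tendsto_le[OF trivial_limit_at_top_linorder G_lim[OF s] tendsto_const])
  show "\<forall>\<^sub>F Y in at_top. integral {0..X} (gg s) \<le> integral {0..Y} (gg s)"
    unfolding eventually_at_top_linorder using G_mono X s by (intro exI[of _ X]) auto
qed

lemma gg_even: "gg s (- x) = gg s x"
  unfolding gg_def by simp

lemma gg_zero: "gg s 0 = 1"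
  unfolding gg_def by simp

lemma lattice1:
  assumes s: "s > 1/2" and b: "\<beta> > 0"
  shows "\<exists>S. ((\<lambda>t::int. gg s (of_int t / \<beta>)) has_sum S) UNIV \<and>
             \<bar>S - \<beta> * Beta (1/2) (s - 1/2)\<bar> \<le> 1"
proof -
  define J where "J = Beta (1/2) (s - 1/2) / 2"
  define u where "u n = gg s (real (Suc n) / \<beta>) / \<beta>" for n
  have s0: "s \<ge> 0" using s by simp
  have u0: "u n \<ge> 0" for n unfolding u_def using gg_pos b by (simp add: less_imp_le)
  have up: "(\<Sum>n<N. u n) \<le> J" for N
  proof -
    have "(\<Sum>n<N. u n) \<le> integral {0..real N / \<beta>} (gg s)"
      unfolding u_def by (rule gg_partial_bounds(1)[OF b s0])
    also have "\<dots> \<le> J" unfolding J_def by (rule G_le_J[OF s]) (use b in auto)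
    finally show ?thesis .
  qed
  have su: "summable u" by (rule summableI_nonneg_bounded[OF u0 up])
  define T where "T = suminf u"
  have TJ: "T \<le> J" unfolding T_def by (rule suminf_le_const[OF su up])
  have low: "integral {0..real N / \<beta>} (gg s) \<le> 1 / \<beta> + T" for N
  proof -
    have "(\<Sum>k<N. gg s (real k / \<beta>) / \<beta>) \<le> 1 / \<beta> + T"
    proof (cases N)
      case 0
      then show ?thesis using b TJ su u0 by (simp add: T_def suminf_nonneg)
    next
      case (Suc M)
      have "(\<Sum>k<N. gg s (real k / \<beta>) / \<beta>) = gg s 0 / \<beta> + (\<Sum>n<M. u n)"
        unfolding Suc u_def by (subst sum.lessThan_Suc_shift) simp
      also have "\<dots> \<le> 1 / \<beta> + T"
        unfolding gg_zero T_def using sum_le_suminf[OF su, of "{..<M}"] u0 by simp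
      finally show ?thesis .
    qed
    then show ?thesis using gg_partial_bounds(2)[OF b s0, of N] by linarith
  qed
  have lim: "((\<lambda>N. integral {0..real N / \<beta>} (gg s)) \<longlongrightarrow> J) sequentially"
  proof -
    have "filterlim (\<lambda>N. (1 / \<beta>) * real N) at_top sequentially"
      by (rule filterlim_tendsto_pos_mult_at_top[OF tendsto_const])
         (use b filterlim_real_sequentially in auto)
    then have "filterlim (\<lambda>N. real N / \<beta>) at_top sequentially" by simp
    from filterlim_compose[OF G_lim[OF s] this] show ?thesis unfolding J_def .
  qed
  have JT: "J \<le> 1 / \<beta> + T"
    by (rule tendsto_le[OF trivial_limit_sequentially tendsto_const lim]) (use low in auto)
  define f where "f t = gg s (of_int t / \<beta>)" for t :: int
  have sums1: "(\<lambda>n. \<beta> * u n) sums (\<beta> * T)"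
    unfolding T_def by (intro sums_mult summable_sums su)
  have hs1: "((\<lambda>n. \<beta> * u n) has_sum (\<beta> * T)) UNIV"
    by (rule sums_nonneg_imp_has_sum[OF sums1]) (use u0 b in auto)
  have bu: "\<beta> * u n = gg s (real (Suc n) / \<beta>)" for n
    unfolding u_def using b by simp
  have hpos: "(f has_sum (\<beta> * T)) {t. t > 0}"
  proof -
    have "((\<lambda>n. \<beta> * u n) has_sum (\<beta> * T)) UNIV = (f has_sum (\<beta> * T)) {t. t > 0}"
      by (rule has_sum_reindex_bij_witness[where i = "\<lambda>t. nat (t - 1)" and j = "\<lambda>n. int n + 1"])
         (auto simp: f_def bu add.commute)
    then show ?thesis using hs1 by simp
  qed
  have hneg: "(f has_sum (\<beta> * T)) {t. t < 0}"
  proof -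
    have "((\<lambda>n. \<beta> * u n) has_sum (\<beta> * T)) UNIV = (f has_sum (\<beta> * T)) {t. t < 0}"
    proof (rule has_sum_reindex_bij_witness[where i = "\<lambda>t. nat (- t - 1)" and j = "\<lambda>n. - int n - 1"])
      fix n :: nat
      have "f (- int n - 1) = gg s (- (real (Suc n) / \<beta>))"
      proof -
        have e: "real_of_int (- int n - 1) / \<beta> = - (real (Suc n) / \<beta>)" using b by (simp add: field_simps)
        show ?thesis unfolding f_def e ..
      qed
      then show "f (- int n - 1) = \<beta> * u n" unfolding bu gg_even .
    qed auto
    then show ?thesis using hs1 by simp
  qed
  have h0: "(f has_sum 1) {0}"
    using has_sum_finite[of "{0::int}" f] by (simp add: f_def gg_zero)
  have "(f has_sum (1 + \<beta> * T)) ({0} \<union> {t. t > 0})"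
    by (rule has_sum_Un_disjoint[OF h0 hpos]) auto
  then have "(f has_sum ((1 + \<beta> * T) + \<beta> * T)) (({0} \<union> {t. t > 0}) \<union> {t. t < 0})"
    by (rule has_sum_Un_disjoint[OF _ hneg]) auto
  moreover have "({0} \<union> {t. t > 0}) \<union> {t::int. t < 0} = UNIV" by auto
  ultimately have hs: "(f has_sum (1 + 2 * \<beta> * T)) UNIV" by (simp add: algebra_simps)
  have "\<bar>(1 + 2 * \<beta> * T) - \<beta> * Beta (1/2) (s - 1/2)\<bar> \<le> 1"
  proof -
    have "\<beta> * T \<le> \<beta> * J" using TJ b by simp
    moreover have "\<beta> * J \<le> 1 + \<beta> * T" using JT b by (simp add: field_simps)
    ultimately show ?thesis unfolding J_def by (simp add: abs_le_iff field_simps)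
  qed
  then show ?thesis using hs unfolding f_def by blast
qed



lemma Beta_pos: "(s::real) > 1/2 \<Longrightarrow> Beta (1/2) (s - 1/2) > (0::real)"
  unfolding Beta_def by (intro divide_pos_pos mult_pos_pos Gamma_real_pos) auto

lemma lattice1c:
  fixes s \<epsilon> :: real
  assumes s: "s > 1/2" and e: "\<epsilon> > 0"
  shows "\<exists>A>0. \<forall>b c. b \<ge> A \<longrightarrow> c \<ge> 1 \<longrightarrow> (\<exists>L.
           ((\<lambda>t::int. (c + (of_int t)\<^sup>2 / b\<^sup>2) powr (-s)) has_sum L) UNIV \<and>
           (1 - \<epsilon>) * (b * Beta (1/2) (s - 1/2) * c powr (1/2 - s)) \<le> L \<and>
           L \<le> (1 + \<epsilon>) * (b * Beta (1/2) (s - 1/2) * c powr (1/2 - s)))"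
proof -
  define B where "B = Beta (1/2) (s - 1/2)"
  have B0: "B > 0" unfolding B_def by (rule Beta_pos[OF s])
  define A where "A = max 1 (1 / (\<epsilon> * B))"
  have A0: "A > 0" unfolding A_def by simp
  show ?thesis
  proof (rule exI[of _ A], intro conjI allI impI A0)
    fix b c :: real assume bA: "b \<ge> A" and c1: "c \<ge> 1"
    define \<beta> where "\<beta> = b * sqrt c"
    have b0: "b > 0" using bA A0 by simp
    have sc: "sqrt c \<ge> 1" using c1 by simp
    have bb: "\<beta> \<ge> b" unfolding \<beta>_def using b0 sc
      by (metis mult_le_cancel_left1 less_imp_le not_le)
    have be0: "\<beta> > 0" using bb b0 by simp
    obtain S where hs: "((\<lambda>t::int. gg s (of_int t / \<beta>)) has_sum S) UNIV"
        and Sb: "\<bar>S - \<beta> * B\<bar> \<le> 1"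
      using lattice1[OF s be0] unfolding B_def by blast
    have one: "1 \<le> \<epsilon> * (\<beta> * B)"
    proof -
      have "1 / (\<epsilon> * B) \<le> \<beta>" using bA bb unfolding A_def by simp
      then show ?thesis using e B0 by (simp add: field_simps)
    qed
    have eqt: "(c + (of_int t)\<^sup>2 / b\<^sup>2) powr (-s) = c powr (-s) * gg s (of_int t / \<beta>)" for t :: int
    proof -
      have "c + (of_int t)\<^sup>2 / b\<^sup>2 = c * (1 + (of_int t / \<beta>)\<^sup>2)"
        unfolding \<beta>_def using c1 b0 by (simp add: field_simps power2_eq_square)
      then show ?thesis unfolding gg_def using c1 pos1
        by (simp add: powr_mult less_imp_le)
    qed
    have hL: "((\<lambda>t::int. (c + (of_int t)\<^sup>2 / b\<^sup>2) powr (-s)) has_sum (c powr (-s) * S)) UNIV"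
      unfolding eqt by (rule has_sum_cmult_right[OF hs])
    have cb: "c powr (-s) * (\<beta> * B) = b * B * c powr (1/2 - s)"
    proof -
      have "c powr (1/2 - s) = sqrt c * c powr (-s)"
        using c1 by (simp add: powr_add[symmetric] powr_half_sqrt[symmetric])
      then show ?thesis unfolding \<beta>_def by simp
    qed
    have cp: "c powr (-s) > 0" using c1 by simp
    have "(1 - \<epsilon>) * (\<beta> * B) \<le> S" and "S \<le> (1 + \<epsilon>) * (\<beta> * B)"
      using Sb one by (auto simp: abs_le_iff algebra_simps)
    then have "c powr (-s) * ((1 - \<epsilon>) * (\<beta> * B)) \<le> c powr (-s) * S"
      and "c powr (-s) * S \<le> c powr (-s) * ((1 + \<epsilon>) * (\<beta> * B))"
      using cp by (auto intro: mult_left_mono)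
    then show "\<exists>L. ((\<lambda>t::int. (c + (of_int t)\<^sup>2 / b\<^sup>2) powr (-s)) has_sum L) UNIV \<and>
           (1 - \<epsilon>) * (b * Beta (1/2) (s - 1/2) * c powr (1/2 - s)) \<le> L \<and>
           L \<le> (1 + \<epsilon>) * (b * Beta (1/2) (s - 1/2) * c powr (1/2 - s))"
      using hL unfolding B_def[symmetric] cb[symmetric]
      by (intro exI[of _ "c powr (-s) * S"]) (simp add: mult.left_commute)
  qed
qed



definition vecs :: "nat set \<Rightarrow> (nat \<Rightarrow> int) set" where
  "vecs I = {k. \<forall>i. i \<notin> I \<longrightarrow> k i = 0}"

definition WW :: "nat set \<Rightarrow> real \<Rightarrow> real \<Rightarrow> (nat \<Rightarrow> real) \<Rightarrow> (nat \<Rightarrow> int) \<Rightarrow> real" where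
  "WW I c s a k = (c + (\<Sum>i\<in>I. (of_int (k i))\<^sup>2 / (a i)\<^sup>2)) powr (-s)"

definition Cn :: "real \<Rightarrow> nat \<Rightarrow> real" where
  "Cn s n = pi powr (real n / 2) * Gamma (s - real n / 2) / Gamma s"

lemma Cn0: "s > 0 \<Longrightarrow> Cn s 0 = 1"
proof -
  assume "s > 0"
  then have "Gamma s > 0" by (rule Gamma_real_pos)
  then show ?thesis unfolding Cn_def by simp
qed

lemma Cn_step:
  assumes "s > 1/2"
  shows "Beta (1/2) (s - 1/2) * Cn (s - 1/2) n = Cn s (Suc n)"
proof -
  have "Gamma (s - 1/2) > 0" by (rule Gamma_real_pos) (use assms in simp)
  then have g1: "Gamma (s - 1/2) \<noteq> 0" by simp
  have e1: "s - 1/2 - real n / 2 = s - real (Suc n) / 2" by (simp add: field_simps)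
  have e2: "sqrt pi * pi powr (real n / 2) = pi powr (real (Suc n) / 2)"
  proof -
    have "pi powr (real (Suc n) / 2) = pi powr (1/2) * pi powr (real n / 2)"
      by (simp add: powr_add[symmetric] field_simps)
    then show ?thesis by (simp add: powr_half_sqrt)
  qed
  have "Beta (1/2) (s - 1/2) * Cn (s - 1/2) n
        = (sqrt pi * pi powr (real n / 2)) * Gamma (s - 1/2 - real n / 2) / Gamma s * (Gamma (s - 1/2) / Gamma (s - 1/2))"
    unfolding Beta_def Cn_def Gamma_one_half_real by simp
  also have "\<dots> = Cn s (Suc n)"
    unfolding e1 e2 Cn_def using g1 by simp
  finally show ?thesis .
qed

lemma WW_nonneg: "WW I c s a k \<ge> 0"
  unfolding WW_def by simp

lemma sumsq_nonneg: "(\<Sum>i\<in>I. (of_int (k i))\<^sup>2 / (a i)\<^sup>2) \<ge> (0::real)"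
  by (intro sum_nonneg) simp

lemma ndim:
  assumes "finite I"
  shows "\<forall>s. s > real (card I) / 2 \<longrightarrow> (\<forall>\<epsilon>. 0 < \<epsilon> \<longrightarrow> \<epsilon> < 1 \<longrightarrow>
    (\<exists>A>0. \<forall>c a. c \<ge> 1 \<longrightarrow> (\<forall>i\<in>I. a i \<ge> A) \<longrightarrow>
      (\<exists>S. (WW I c s a has_sum S) (vecs I) \<and>
          (1 - \<epsilon>) ^ card I * (c powr (real (card I) / 2 - s) * (\<Prod>i\<in>I. a i) * Cn s (card I)) \<le> S \<and>
          S \<le> (1 + \<epsilon>) ^ card I * (c powr (real (card I) / 2 - s) * (\<Prod>i\<in>I. a i) * Cn s (card I)))))"
  using assms
proof (induction I rule: finite_induct)
  case empty
  show ?case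
  proof (intro allI impI)
    fix s \<epsilon> :: real assume s: "s > real (card {}) / 2" and e: "0 < \<epsilon>" "\<epsilon> < 1"
    have v: "vecs {} = {\<lambda>_. 0}" unfolding vecs_def by auto
    show "\<exists>A>0. \<forall>c a. c \<ge> 1 \<longrightarrow> (\<forall>i\<in>{}. a i \<ge> A) \<longrightarrow>
      (\<exists>S. (WW {} c s a has_sum S) (vecs {}) \<and>
          (1 - \<epsilon>) ^ card {} * (c powr (real (card {}) / 2 - s) * (\<Prod>i\<in>{}. a i) * Cn s (card {})) \<le> S \<and>
          S \<le> (1 + \<epsilon>) ^ card {} * (c powr (real (card {}) / 2 - s) * (\<Prod>i\<in>{}. a i) * Cn s (card {})))"
    proof (rule exI[of _ 1], intro conjI allI impI)
      fix c :: real and a :: "nat \<Rightarrow> real"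
      have "(WW {} c s a has_sum c powr (-s)) (vecs {})"
        unfolding v using has_sum_finite[of "{\<lambda>_. 0::int}" "WW {} c s a"] by (simp add: WW_def)
      then show "\<exists>S. (WW {} c s a has_sum S) (vecs {}) \<and>
          (1 - \<epsilon>) ^ card {} * (c powr (real (card {}) / 2 - s) * (\<Prod>i\<in>{}. a i) * Cn s (card {})) \<le> S \<and>
          S \<le> (1 + \<epsilon>) ^ card {} * (c powr (real (card {}) / 2 - s) * (\<Prod>i\<in>{}. a i) * Cn s (card {}))"
        using Cn0[of s] s by auto
    qed simp
  qed
next
  case (insert j I)
  define n where "n = card I"
  have cardI: "card (insert j I) = Suc n" using insert n_def by simp
  show ?case
  proof (intro allI impI)
    fix s \<epsilon> :: real assume s: "s > real (card (insert j I)) / 2" and e: "0 < \<epsilon>" "\<epsilon> < 1"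
    have s1: "s - 1/2 > real (card I) / 2" using s cardI n_def by simp
    have s2: "s > 1/2" using s cardI by simp
    obtain A1 where A1: "A1 > 0" and HA1: "\<forall>c a. c \<ge> 1 \<longrightarrow> (\<forall>i\<in>I. a i \<ge> A1) \<longrightarrow>
      (\<exists>S. (WW I c (s - 1/2) a has_sum S) (vecs I) \<and>
          (1 - \<epsilon>) ^ card I * (c powr (real (card I) / 2 - (s - 1/2)) * (\<Prod>i\<in>I. a i) * Cn (s - 1/2) (card I)) \<le> S \<and>
          S \<le> (1 + \<epsilon>) ^ card I * (c powr (real (card I) / 2 - (s - 1/2)) * (\<Prod>i\<in>I. a i) * Cn (s - 1/2) (card I)))"
      using insert.IH s1 e by blast
    obtain A2 where A2: "A2 > 0" and HA2: "\<forall>b c. b \<ge> A2 \<longrightarrow> c \<ge> 1 \<longrightarrow> (\<exists>L.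
           ((\<lambda>t::int. (c + (of_int t)\<^sup>2 / b\<^sup>2) powr (-s)) has_sum L) UNIV \<and>
           (1 - \<epsilon>) * (b * Beta (1/2) (s - 1/2) * c powr (1/2 - s)) \<le> L \<and>
           L \<le> (1 + \<epsilon>) * (b * Beta (1/2) (s - 1/2) * c powr (1/2 - s)))"
      using lattice1c[OF s2 e(1)] by blast
    define A where "A = max A1 A2"
    show "\<exists>A>0. \<forall>c a. c \<ge> 1 \<longrightarrow> (\<forall>i\<in>insert j I. a i \<ge> A) \<longrightarrow>
      (\<exists>S. (WW (insert j I) c s a has_sum S) (vecs (insert j I)) \<and>
          (1 - \<epsilon>) ^ card (insert j I) * (c powr (real (card (insert j I)) / 2 - s) * (\<Prod>i\<in>insert j I. a i) * Cn s (card (insert j I))) \<le> S \<and>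
          S \<le> (1 + \<epsilon>) ^ card (insert j I) * (c powr (real (card (insert j I)) / 2 - s) * (\<Prod>i\<in>insert j I. a i) * Cn s (card (insert j I))))"
    proof (rule exI[of _ A], intro conjI allI impI)
      show "A > 0" unfolding A_def using A1 by simp
      fix c :: real and a :: "nat \<Rightarrow> real"
      assume c1: "c \<ge> 1" and aA: "\<forall>i\<in>insert j I. a i \<ge> A"
      define B where "B = Beta (1/2) (s - 1/2)"
      have B0: "B > 0" unfolding B_def by (rule Beta_pos[OF s2])
      have aj: "a j \<ge> A2" and aj0: "a j > 0" using aA A2 unfolding A_def by force+
      have aI: "\<forall>i\<in>I. a i \<ge> A1" using aA unfolding A_def by force
      obtain S' where hS': "(WW I c (s - 1/2) a has_sum S') (vecs I)"
        and S'lo: "(1 - \<epsilon>) ^ card I * (c powr (real (card I) / 2 - (s - 1/2)) * (\<Prod>i\<in>I. a i) * Cn (s - 1/2) (card I)) \<le> S'"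
        and S'hi: "S' \<le> (1 + \<epsilon>) ^ card I * (c powr (real (card I) / 2 - (s - 1/2)) * (\<Prod>i\<in>I. a i) * Cn (s - 1/2) (card I))"
        using HA1 c1 aI by blast
      define c' where "c' k = c + (\<Sum>i\<in>I. (of_int (k i))\<^sup>2 / (a i)\<^sup>2)" for k :: "nat \<Rightarrow> int"
      have c'1: "c' k \<ge> 1" for k unfolding c'_def using c1 sumsq_nonneg[where I=I and k=k and a=a] by linarith
      define F where "F p = WW (insert j I) c s a ((fst p)(j := snd p))" for p :: "(nat \<Rightarrow> int) \<times> int"
      have Feq: "F (k, t) = (c' k + (of_int t)\<^sup>2 / (a j)\<^sup>2) powr (-s)" if "k \<in> vecs I" for k t
      proof -
        have "(\<Sum>i\<in>I. (of_int ((k(j := t)) i))\<^sup>2 / (a i)\<^sup>2) = (\<Sum>i\<in>I. (of_int (k i))\<^sup>2 / (a i)\<^sup>2 :: real)"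
          by (rule sum.cong) (use insert.hyps in auto)
        then show ?thesis
          unfolding F_def WW_def c'_def using insert.hyps by (simp add: algebra_simps)
      qed
      define Lf where "Lf k = infsum (\<lambda>t. F (k, t)) UNIV" for k
      have WI: "WW I c (s - 1/2) a k = c' k powr (1/2 - s)" for k
        unfolding WW_def c'_def by simp
      have Lf: "((\<lambda>t. F (k, t)) has_sum Lf k) UNIV \<and>
           (1 - \<epsilon>) * (a j * B * WW I c (s - 1/2) a k) \<le> Lf k \<and>
           Lf k \<le> (1 + \<epsilon>) * (a j * B * WW I c (s - 1/2) a k)" if k: "k \<in> vecs I" for k
      proof -
        obtain L where hL: "((\<lambda>t::int. (c' k + (of_int t)\<^sup>2 / (a j)\<^sup>2) powr (-s)) has_sum L) UNIV"
          and lo: "(1 - \<epsilon>) * (a j * B * c' k powr (1/2 - s)) \<le> L"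
          and hi: "L \<le> (1 + \<epsilon>) * (a j * B * c' k powr (1/2 - s))"
          using HA2 aj c'1[of k] unfolding B_def by blast
        have hL': "((\<lambda>t. F (k, t)) has_sum L) UNIV" using hL Feq[OF k] by simp
        then have "Lf k = L" unfolding Lf_def by (rule infsumI)
        then show ?thesis using hL' lo hi unfolding WI by simp
      qed
      have Fnn: "F p \<ge> 0" for p unfolding F_def by (rule WW_nonneg)
      have hW1: "((\<lambda>k. (1 + \<epsilon>) * (a j * B) * WW I c (s - 1/2) a k) has_sum ((1 + \<epsilon>) * (a j * B) * S')) (vecs I)"
        by (rule has_sum_cmult_right[OF hS'])
      have hW0: "((\<lambda>k. (1 - \<epsilon>) * (a j * B) * WW I c (s - 1/2) a k) has_sum ((1 - \<epsilon>) * (a j * B) * S')) (vecs I)"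
        by (rule has_sum_cmult_right[OF hS'])
      have Lfsum: "Lf summable_on vecs I"
      proof (rule summable_on_comparison_test[OF has_sum_imp_summable[OF hW1]])
        fix k assume "k \<in> vecs I"
        from Lf[OF this] show "Lf k \<le> (1 + \<epsilon>) * (a j * B) * WW I c (s - 1/2) a k"
          by (simp add: mult.assoc)
        from Lf[OF \<open>k \<in> vecs I\<close>] show "0 \<le> Lf k"
          using has_sum_nonneg Fnn by blast
      qed
      define \<Lambda> where "\<Lambda> = infsum Lf (vecs I)"
      have hLf: "(Lf has_sum \<Lambda>) (vecs I)" unfolding \<Lambda>_def using Lfsum by (rule has_sum_infsum)
      have Llo: "(1 - \<epsilon>) * (a j * B) * S' \<le> \<Lambda>"
        by (rule has_sum_mono[OF hW0 hLf]) (use Lf in \<open>auto simp: mult.assoc\<close>)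
      have Lhi: "\<Lambda> \<le> (1 + \<epsilon>) * (a j * B) * S'"
        by (rule has_sum_mono[OF hLf hW1]) (use Lf in \<open>auto simp: mult.assoc\<close>)
      have Fsum: "F summable_on Sigma (vecs I) (\<lambda>_. UNIV)"
        by (rule summable_on_SigmaI[where g = Lf]) (use Lf Lfsum Fnn in auto)
      then obtain tot where htot: "(F has_sum tot) (Sigma (vecs I) (\<lambda>_. UNIV))"
        unfolding summable_on_def by blast
      have "(Lf has_sum tot) (vecs I)"
        by (rule has_sum_Sigma'[OF htot]) (use Lf in auto)
      then have tot: "tot = \<Lambda>" using hLf has_sum_unique by blast
      have hfinal: "(WW (insert j I) c s a has_sum \<Lambda>) (vecs (insert j I))"
      proof -
        have "(F has_sum \<Lambda>) (Sigma (vecs I) (\<lambda>_. UNIV)) =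
              (WW (insert j I) c s a has_sum \<Lambda>) (vecs (insert j I))"
        proof (rule has_sum_reindex_bij_witness[where i = "\<lambda>k. (k(j := 0), k j)" and j = "\<lambda>p. (fst p)(j := snd p)"])
          fix p :: "(nat \<Rightarrow> int) \<times> int" assume "p \<in> Sigma (vecs I) (\<lambda>_. UNIV)"
          then have "fst p j = 0" using insert.hyps unfolding vecs_def by auto
          then show "(((fst p)(j := snd p))(j := 0), ((fst p)(j := snd p)) j) = p"
            by (cases p) auto
        next
          fix p :: "(nat \<Rightarrow> int) \<times> int" assume "p \<in> Sigma (vecs I) (\<lambda>_. UNIV)"
          then show "(fst p)(j := snd p) \<in> vecs (insert j I)" unfolding vecs_def by auto
        next
          fix k assume "k \<in> vecs (insert j I)"
          show "(fst (k(j := 0), k j))(j := snd (k(j := 0), k j)) = k" by simp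
        next
          fix k assume "k \<in> vecs (insert j I)"
          then show "(k(j := 0), k j) \<in> Sigma (vecs I) (\<lambda>_. UNIV)" unfolding vecs_def by auto
        next
          fix p :: "(nat \<Rightarrow> int) \<times> int" assume "p \<in> Sigma (vecs I) (\<lambda>_. UNIV)"
          show "WW (insert j I) c s a ((fst p)(j := snd p)) = F p" unfolding F_def ..
        qed simp
        then show ?thesis using htot tot by simp
      qed
      define X' where "X' = c powr (real (card I) / 2 - (s - 1/2)) * (\<Prod>i\<in>I. a i) * Cn (s - 1/2) (card I)"
      define X where "X = c powr (real (card (insert j I)) / 2 - s) * (\<Prod>i\<in>insert j I. a i) * Cn s (card (insert j I))"
      have XX: "a j * B * X' = X"
      proof -
        have e: "real (card I) / 2 - (s - 1/2) = real (card (insert j I)) / 2 - s"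
          using cardI n_def by (simp add: field_simps)
        have cn: "B * Cn (s - 1/2) (card I) = Cn s (card (insert j I))"
          unfolding B_def cardI n_def by (rule Cn_step[OF s2])
        have pr: "(\<Prod>i\<in>insert j I. a i) = a j * (\<Prod>i\<in>I. a i)"
          using insert.hyps by simp
        show ?thesis unfolding X_def X'_def e pr cn[symmetric] by (simp add: mult_ac)
      qed
      have pos: "a j * B \<ge> 0" using aj0 B0 by simp
      have lo: "(1 - \<epsilon>) ^ card (insert j I) * X \<le> \<Lambda>"
      proof -
        have "(1 - \<epsilon>) ^ card (insert j I) * X = (1 - \<epsilon>) * (a j * B) * ((1 - \<epsilon>) ^ card I * X')"
          unfolding XX[symmetric] cardI n_def by (simp add: mult_ac)
        also have "\<dots> \<le> (1 - \<epsilon>) * (a j * B) * S'"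
          by (rule mult_left_mono) (use S'lo pos e in \<open>auto simp: X'_def\<close>)
        finally show ?thesis using Llo by linarith
      qed
      have hi: "\<Lambda> \<le> (1 + \<epsilon>) ^ card (insert j I) * X"
      proof -
        have "(1 + \<epsilon>) ^ card (insert j I) * X = (1 + \<epsilon>) * (a j * B) * ((1 + \<epsilon>) ^ card I * X')"
          unfolding XX[symmetric] cardI n_def by (simp add: mult_ac)
        moreover have "(1 + \<epsilon>) * (a j * B) * S' \<le> (1 + \<epsilon>) * (a j * B) * ((1 + \<epsilon>) ^ card I * X')"
          by (rule mult_left_mono) (use S'hi pos e in \<open>auto simp: X'_def\<close>)
        ultimately show ?thesis using Lhi by linarith
      qed
      show "\<exists>S. (WW (insert j I) c s a has_sum S) (vecs (insert j I)) \<and>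
          (1 - \<epsilon>) ^ card (insert j I) * (c powr (real (card (insert j I)) / 2 - s) * (\<Prod>i\<in>insert j I. a i) * Cn s (card (insert j I))) \<le> S \<and>
          S \<le> (1 + \<epsilon>) ^ card (insert j I) * (c powr (real (card (insert j I)) / 2 - s) * (\<Prod>i\<in>insert j I. a i) * Cn s (card (insert j I)))"
        using hfinal lo hi unfolding X_def by blast
    qed
  qed
qed



lemma eps_choice:
  fixes e' :: real and d :: nat
  assumes "e' > 0"
  shows "\<exists>\<epsilon>. 0 < \<epsilon> \<and> \<epsilon> < 1 \<and> ((1 + \<epsilon>) / (1 - \<epsilon>)) ^ d < 1 + e' \<and>
             1 - e' < ((1 - \<epsilon>) / (1 + \<epsilon>)) ^ d"
proof -
  have t1: "((\<lambda>x::real. ((1 + x) / (1 - x)) ^ d) \<longlongrightarrow> ((1 + 0) / (1 - 0)) ^ d) (at_right 0)"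
    by (intro tendsto_intros) auto
  have t2: "((\<lambda>x::real. ((1 - x) / (1 + x)) ^ d) \<longlongrightarrow> ((1 - 0) / (1 + 0)) ^ d) (at_right 0)"
    by (intro tendsto_intros) auto
  have ev1: "eventually (\<lambda>x. ((1 + x) / (1 - x)) ^ d < 1 + e') (at_right (0::real))"
    by (rule order_tendstoD(2)[OF t1]) (use assms in simp)
  have ev2: "eventually (\<lambda>x. 1 - e' < ((1 - x) / (1 + x)) ^ d) (at_right (0::real))"
    by (rule order_tendstoD(1)[OF t2]) (use assms in simp)
  from eventually_conj[OF ev1 ev2] obtain b where b: "b > 0"
    and hb: "\<forall>y>0. y < b \<longrightarrow> ((1 + y) / (1 - y)) ^ d < 1 + e' \<and> 1 - e' < ((1 - y) / (1 + y)) ^ d"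
    unfolding eventually_at_right_field by auto
  define \<epsilon> where "\<epsilon> = min (b / 2) (1 / 2)"
  have "0 < \<epsilon>" "\<epsilon> < b" "\<epsilon> < 1" using b unfolding \<epsilon>_def by auto
  then show ?thesis using hb by blast
qed

lemma ratio_bound:
  fixes Sm Sf Xm Xf \<epsilon> :: real
  assumes Xm: "Xm > 0" and Xf: "Xf > 0" and e: "0 < \<epsilon>" "\<epsilon> < 1" and n1: "n1 \<le> d"
    and m1: "(1 - \<epsilon>) ^ n1 * Xm \<le> Sm" and m2: "Sm \<le> (1 + \<epsilon>) ^ n1 * Xm"
    and f1: "(1 - \<epsilon>) ^ d * Xf \<le> Sf" and f2: "Sf \<le> (1 + \<epsilon>) ^ d * Xf"
  shows "((1 - \<epsilon>) / (1 + \<epsilon>)) ^ d \<le> (Sm / Sf) / (Xm / Xf)"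
    and "(Sm / Sf) / (Xm / Xf) \<le> ((1 + \<epsilon>) / (1 - \<epsilon>)) ^ d"
proof -
  define p where "p = Sm / Xm"
  define q where "q = Sf / Xf"
  have eq: "(Sm / Sf) / (Xm / Xf) = p / q" unfolding p_def q_def using Xm Xf by (simp add: field_simps)
  have p1: "(1 - \<epsilon>) ^ n1 \<le> p" and p2: "p \<le> (1 + \<epsilon>) ^ n1"
    unfolding p_def using m1 m2 Xm by (simp_all add: field_simps)
  have q1: "(1 - \<epsilon>) ^ d \<le> q" and q2: "q \<le> (1 + \<epsilon>) ^ d"
    unfolding q_def using f1 f2 Xf by (simp_all add: field_simps)
  have a1: "(1 - \<epsilon>) ^ d \<le> (1 - \<epsilon>) ^ n1" by (rule power_decreasing) (use n1 e in auto)
  have a2: "(1 + \<epsilon>) ^ n1 \<le> (1 + \<epsilon>) ^ d" by (rule power_increasing) (use n1 e in auto)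
  have lpos: "(1 - \<epsilon>) ^ d > 0" using e by simp
  have qpos: "q > 0" using q1 lpos by linarith
  show "((1 - \<epsilon>) / (1 + \<epsilon>)) ^ d \<le> (Sm / Sf) / (Xm / Xf)"
    unfolding eq power_divide
  proof (rule frac_le)
    show "(1 - \<epsilon>) ^ d \<le> p" using a1 p1 by linarith
    then show "0 \<le> p" using lpos by linarith
    show "0 < q" by (rule qpos)
    show "q \<le> (1 + \<epsilon>) ^ d" by (rule q2)
  qed
  show "(Sm / Sf) / (Xm / Xf) \<le> ((1 + \<epsilon>) / (1 - \<epsilon>)) ^ d"
    unfolding eq power_divide
  proof (rule frac_le)
    show "p \<le> (1 + \<epsilon>) ^ d" using a2 p2 by linarith
    show "0 \<le> (1 + \<epsilon>) ^ d" using e by simp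
    show "0 < (1 - \<epsilon>) ^ d" by (rule lpos)
    show "(1 - \<epsilon>) ^ d \<le> q" by (rule q1)
  qed
qed

lemma Cn_pos: "s > real n / 2 \<Longrightarrow> Cn s n > 0"
proof -
  assume s: "s > real n / 2"
  have "Gamma (s - real n / 2) > 0" by (rule Gamma_real_pos) (use s in simp)
  moreover have "Gamma s > 0" by (rule Gamma_real_pos) (use s in \<open>simp add: order_le_less_trans[OF _ s]\<close>)
  ultimately show ?thesis unfolding Cn_def by simp
qed

lemma sum_split_at:
  fixes f :: "nat \<Rightarrow> 'a::comm_monoid_add"
  assumes "d' \<le> d"
  shows "(\<Sum>i<d. f i) = (\<Sum>i<d'. f i) + (\<Sum>i\<in>{d'..<d}. f i)"
  using assms by (simp add: lessThan_atLeast0 sum.atLeastLessThan_concat)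

lemma prod_split_at:
  fixes f :: "nat \<Rightarrow> 'a::comm_monoid_mult"
  assumes "d' \<le> d"
  shows "(\<Prod>i<d. f i) = (\<Prod>i<d'. f i) * (\<Prod>i\<in>{d'..<d}. f i)"
  using assms by (simp add: lessThan_atLeast0 prod.atLeastLessThan_concat)

theorem theorem9:
  fixes d d' :: nat and m :: real and k0 :: "nat \<Rightarrow> int"
  assumes "d \<ge> 2" and "m > 0" and "1 \<le> d'" and "d' \<le> d - 1"
  shows "\<forall>\<epsilon>>0. \<exists>A. \<forall>a :: nat \<Rightarrow> real. (\<forall>i<d. A \<le> a i) \<longrightarrow>
           \<bar>tsallis_marginal m d d' a k0 / tsallis_approx m d' a k0 - 1\<bar> < \<epsilon>"
proof (intro allI impI)
  fix e' :: real assume e': "e' > 0"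
  have dd: "d' \<le> d" using assms by simp
  define s where "s = (m + real d) / 2"
  obtain \<epsilon> where e: "0 < \<epsilon>" "\<epsilon> < 1" and eb1: "((1 + \<epsilon>) / (1 - \<epsilon>)) ^ d < 1 + e'"
    and eb2: "1 - e' < ((1 - \<epsilon>) / (1 + \<epsilon>)) ^ d"
    using eps_choice[OF e', of d] by blast
  have cf: "card {..<d} = d" by simp
  have cm: "card {d'..<d} = d - d'" by simp
  have sf: "s > real (card {..<d}) / 2" unfolding s_def using assms by simp
  have sm: "s > real (card {d'..<d}) / 2" unfolding s_def cm using assms dd by (simp add: of_nat_diff)
  obtain A1 where A1: "A1 > 0" and HA1: "\<forall>c a. c \<ge> 1 \<longrightarrow> (\<forall>i\<in>{..<d}. a i \<ge> A1) \<longrightarrow>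
      (\<exists>S. (WW {..<d} c s a has_sum S) (vecs {..<d}) \<and>
          (1 - \<epsilon>) ^ card {..<d} * (c powr (real (card {..<d}) / 2 - s) * (\<Prod>i\<in>{..<d}. a i) * Cn s (card {..<d})) \<le> S \<and>
          S \<le> (1 + \<epsilon>) ^ card {..<d} * (c powr (real (card {..<d}) / 2 - s) * (\<Prod>i\<in>{..<d}. a i) * Cn s (card {..<d})))"
    using ndim[of "{..<d}"] sf e by blast
  obtain A2 where A2: "A2 > 0" and HA2: "\<forall>c a. c \<ge> 1 \<longrightarrow> (\<forall>i\<in>{d'..<d}. a i \<ge> A2) \<longrightarrow>
      (\<exists>S. (WW {d'..<d} c s a has_sum S) (vecs {d'..<d}) \<and>
          (1 - \<epsilon>) ^ card {d'..<d} * (c powr (real (card {d'..<d}) / 2 - s) * (\<Prod>i\<in>{d'..<d}. a i) * Cn s (card {d'..<d})) \<le> S \<and>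
          S \<le> (1 + \<epsilon>) ^ card {d'..<d} * (c powr (real (card {d'..<d}) / 2 - s) * (\<Prod>i\<in>{d'..<d}. a i) * Cn s (card {d'..<d})))"
    using ndim[of "{d'..<d}"] sm e by blast
  show "\<exists>A. \<forall>a :: nat \<Rightarrow> real. (\<forall>i<d. A \<le> a i) \<longrightarrow>
           \<bar>tsallis_marginal m d d' a k0 / tsallis_approx m d' a k0 - 1\<bar> < e'"
  proof (rule exI[of _ "max A1 A2"], intro allI impI)
    fix a :: "nat \<Rightarrow> real" assume aA: "\<forall>i<d. max A1 A2 \<le> a i"
    have apos: "a i > 0" if "i < d" for i using aA A1 that by force
    obtain Sf where hSf: "(WW {..<d} 1 s a has_sum Sf) (vecs {..<d})"
      and f1: "(1 - \<epsilon>) ^ d * (\<Prod>i<d. a i) * Cn s d \<le> Sf"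
      and f2: "Sf \<le> (1 + \<epsilon>) ^ d * (\<Prod>i<d. a i) * Cn s d"
    proof -
      have "\<forall>i\<in>{..<d}. a i \<ge> A1" using aA by auto
      then obtain S where "(WW {..<d} 1 s a has_sum S) (vecs {..<d})"
        "(1 - \<epsilon>) ^ card {..<d} * (1 powr (real (card {..<d}) / 2 - s) * (\<Prod>i\<in>{..<d}. a i) * Cn s (card {..<d})) \<le> S"
        "S \<le> (1 + \<epsilon>) ^ card {..<d} * (1 powr (real (card {..<d}) / 2 - s) * (\<Prod>i\<in>{..<d}. a i) * Cn s (card {..<d}))"
        using HA1[rule_format, of 1 a] by auto
      then show ?thesis using that by (simp add: mult.assoc)
    qed
    define c0 where "c0 = 1 + (\<Sum>i<d'. (of_int (k0 i))\<^sup>2 / (a i)\<^sup>2)"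
    have c01: "c0 \<ge> 1" unfolding c0_def using sumsq_nonneg[where I="{..<d'}" and k=k0 and a=a] by simp
    obtain Sm where hSm: "(WW {d'..<d} c0 s a has_sum Sm) (vecs {d'..<d})"
      and m1: "(1 - \<epsilon>) ^ (d - d') * (c0 powr (real (d - d') / 2 - s) * (\<Prod>i\<in>{d'..<d}. a i) * Cn s (d - d')) \<le> Sm"
      and m2: "Sm \<le> (1 + \<epsilon>) ^ (d - d') * (c0 powr (real (d - d') / 2 - s) * (\<Prod>i\<in>{d'..<d}. a i) * Cn s (d - d'))"
    proof -
      have "\<forall>i\<in>{d'..<d}. a i \<ge> A2" using aA by auto
      then show ?thesis using HA2[rule_format, OF c01, of a] that unfolding cm by blast
    qed
    have wf: "tsallis_weight m d a = WW {..<d} 1 s a"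
      unfolding tsallis_weight_def WW_def s_def by (intro ext) (simp add: minus_divide_left)
    have zv: "zvecs d = vecs {..<d}" unfolding zvecs_def vecs_def by auto
    have fS: "tsallis_f m d a = Sf" unfolding tsallis_f_def wf zv using hSf by (rule infsumI)
    define M where "M = {k \<in> zvecs d. \<forall>i<d'. k i = k0 i}"
    have hM: "(tsallis_weight m d a has_sum Sm) M"
    proof -
      have "(WW {d'..<d} c0 s a has_sum Sm) (vecs {d'..<d}) = (tsallis_weight m d a has_sum Sm) M"
      proof (rule has_sum_reindex_bij_witness[where i = "\<lambda>k i. if i < d' then 0 else k i"
                and j = "\<lambda>k i. if i < d' then k0 i else k i"])
        fix k assume "k \<in> vecs {d'..<d}"
        then show "(\<lambda>i. if i < d' then 0 else (if i < d' then k0 i else k i)) = k"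
          unfolding vecs_def by auto
      next
        fix k assume "k \<in> vecs {d'..<d}"
        then show "(\<lambda>i. if i < d' then k0 i else k i) \<in> M"
          unfolding vecs_def M_def zvecs_def using dd by auto
      next
        fix k assume "k \<in> M"
        then show "(\<lambda>i. if i < d' then k0 i else (if i < d' then 0 else k i)) = k"
          unfolding M_def by auto
      next
        fix k assume "k \<in> M"
        then show "(\<lambda>i. if i < d' then 0 else k i) \<in> vecs {d'..<d}"
          unfolding M_def zvecs_def vecs_def by auto
      next
        fix k assume "k \<in> vecs {d'..<d}"
        define k' where "k' = (\<lambda>i. if i < d' then k0 i else k i)"
        have "(\<Sum>i<d. (of_int (k' i))\<^sup>2 / (a i)\<^sup>2) =
              (\<Sum>i<d'. (of_int (k' i))\<^sup>2 / (a i)\<^sup>2) + (\<Sum>i\<in>{d'..<d}. (of_int (k' i))\<^sup>2 / (a i)\<^sup>2 :: real)"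
          by (rule sum_split_at[OF dd])
        also have "(\<Sum>i<d'. (of_int (k' i))\<^sup>2 / (a i)\<^sup>2) = (\<Sum>i<d'. (of_int (k0 i))\<^sup>2 / (a i)\<^sup>2 :: real)"
          unfolding k'_def by (rule sum.cong) auto
        also have "(\<Sum>i\<in>{d'..<d}. (of_int (k' i))\<^sup>2 / (a i)\<^sup>2) = (\<Sum>i\<in>{d'..<d}. (of_int (k i))\<^sup>2 / (a i)\<^sup>2 :: real)"
          unfolding k'_def by (rule sum.cong) auto
        finally have "1 + (\<Sum>i<d. (of_int (k' i))\<^sup>2 / (a i)\<^sup>2) = c0 + (\<Sum>i\<in>{d'..<d}. (of_int (k i))\<^sup>2 / (a i)\<^sup>2 :: real)"
          unfolding c0_def by simp
        then show "tsallis_weight m d a k' = WW {d'..<d} c0 s a k"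
          unfolding wf WW_def by simp
      qed simp
      then show ?thesis using hSm by simp
    qed
    have marg: "tsallis_marginal m d d' a k0 = Sm / Sf"
    proof -
      have "((\<lambda>k. tsallis_weight m d a k * (1 / Sf)) has_sum (Sm * (1 / Sf))) M"
        by (rule has_sum_cmult_left[OF hM])
      then have "(tsallis_p m d a has_sum (Sm / Sf)) M"
        unfolding tsallis_p_def fS by simp
      then show ?thesis unfolding tsallis_marginal_def M_def[symmetric] by (rule infsumI)
    qed
    define Xm where "Xm = c0 powr (real (d - d') / 2 - s) * (\<Prod>i\<in>{d'..<d}. a i) * Cn s (d - d')"
    define Xf where "Xf = (\<Prod>i<d. a i) * Cn s d"
    have pm: "(\<Prod>i\<in>{d'..<d}. a i) > 0" using apos by (intro prod_pos) auto
    have pd': "(\<Prod>i<d'. a i) > 0" using apos dd by (intro prod_pos) auto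
    have pf: "(\<Prod>i<d. a i) > 0" using apos by (intro prod_pos) auto
    have Xm0: "Xm > 0" unfolding Xm_def using pm Cn_pos[OF sm[unfolded cm]] c01 by simp
    have Xf0: "Xf > 0" unfolding Xf_def using pf Cn_pos[OF sf[unfolded cf]] by simp
    have appr: "tsallis_approx m d' a k0 = Xm / Xf"
    proof -
      have rdd: "real (d - d') = real d - real d'" using dd by (simp add: of_nat_diff)
      have ex: "real (d - d') / 2 - s = - (m + real d') / 2" unfolding rdd s_def by (simp add: field_simps)
      have g1: "s - real (d - d') / 2 = (m + real d') / 2" unfolding rdd s_def by (simp add: field_simps)
      have g2: "s - real d / 2 = m / 2" unfolding s_def by (simp add: field_simps)
      have pp: "pi powr (real d / 2) = pi powr (real (d - d') / 2) * pi powr (real d' / 2)"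
        unfolding rdd by (simp add: powr_add[symmetric] field_simps)
      have gs: "Gamma s > 0" by (rule Gamma_real_pos) (use assms in \<open>simp add: s_def add_pos_nonneg\<close>)
      have gm: "Gamma (m / 2) > 0" by (rule Gamma_real_pos) (use assms in simp)
      have gm': "Gamma ((m + real d') / 2) > 0" by (rule Gamma_real_pos) (use assms in \<open>simp add: add_pos_nonneg\<close>)
      have "Xm / Xf = c0 powr (- (m + real d') / 2) * (\<Prod>i\<in>{d'..<d}. a i) *
              (pi powr (real (d - d') / 2) * Gamma ((m + real d') / 2) / Gamma s) /
              ((\<Prod>i<d'. a i) * (\<Prod>i\<in>{d'..<d}. a i) * (pi powr (real (d - d') / 2) * pi powr (real d' / 2) * Gamma (m / 2) / Gamma s))"
        unfolding Xm_def Xf_def Cn_def ex g1 g2 pp prod_split_at[OF dd] ..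
      also have "\<dots> = tsallis_approx m d' a k0"
      proof -
        have gen: "\<And>P Q G1 G2 G3 C Pi1 Pi2::real. P > 0 \<Longrightarrow> Q > 0 \<Longrightarrow> G1 > 0 \<Longrightarrow> G2 > 0 \<Longrightarrow>
            Pi1 > 0 \<Longrightarrow> Pi2 > 0 \<Longrightarrow>
            C * P * (Pi1 * G3 / G1) / (Q * P * (Pi1 * Pi2 * G2 / G1)) = G3 / (Pi2 * G2 * Q) * C"
          by (simp add: field_simps)
        show ?thesis unfolding tsallis_approx_def c0_def[symmetric]
          by (rule gen) (use pm pd' gs gm in auto)
      qed
      finally show ?thesis by simp
    qed
    have rb1: "((1 - \<epsilon>) / (1 + \<epsilon>)) ^ d \<le> (Sm / Sf) / (Xm / Xf)"
      and rb2: "(Sm / Sf) / (Xm / Xf) \<le> ((1 + \<epsilon>) / (1 - \<epsilon>)) ^ d"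
      using ratio_bound[OF Xm0 Xf0 e, of "d - d'" d Sm Sf] m1 m2 f1 f2
      unfolding Xm_def Xf_def by (auto simp: mult.assoc)
    show "\<bar>tsallis_marginal m d d' a k0 / tsallis_approx m d' a k0 - 1\<bar> < e'"
      unfolding marg appr using rb1 rb2 eb1 eb2 by (simp add: abs_less_iff)
  qed
qed

end
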